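(* Let PS1 and PS2 be pure strategies (as in the context) with $m_{PS1}$ finite, and suppose PS2 is equivalent to PS1, i.e. $\Delta_{PS1}(X)=\Delta_{PS2}(X)$ for every $X\in\mathcal{S}_{\mathrm{non}}$. Then for any mixed strategy MS derived from PS1 and PS2, $m_{MS}(X)=m_{PS1}(X)$ for every initial population $X$.
   Context: A fitness function $f$ on a finite set is to be maximised. A metaheuristic generates populations $\Phi_0,\Phi_1,\dots$. Let $\mathcal{S}$ be the finite set of all populations, $\mathcal{S}_{\mathrm{opt}}$ those containing at least one optimal solution, $\mathcal{S}_{\mathrm{non}}=\mathcal{S}\setminus\mathcal{S}_{\mathrm{opt}}$. The sequence is a time-homogeneous Markov chain on $\mathcal{S}$ with transition probabilities $P(X,Y)=\Pr(\Phi_{t+1}=Y\mid\Phi_t=X)$, every state of $\mathcal{S}_{\mathrm{opt}}$ absorbing. The expected hitting time $m(X)\in[0,\infty]$ is the expected number of generations until first entering $\mathcal{S}_{\mathrm{opt}}$ from $\Phi_0=X$ ($m(X)=0$ on $\mathcal{S}_{\mathrm{opt}}$). A pure strategy is such a time-independent transition matrix. PS1, PS2 are pure strategies with transition matrices $P_1,P_2$ on the same $\mathcal{S}$ (with $\mathcal{S}_{\mathrm{opt}}$ absorbing), expected hitting times $m_{PS1},m_{PS2}$. A mixed strategy MS derived from PS1 and PS2 assigns to each $X\in\mathcal{S}$ probabilities $P_X(PS1)\in[0,1]$, $P_X(PS2)=1-P_X(PS1)$, and has transition matrix $P_{MS}(X,Y)=P_X(PS1)P_1(X,Y)+P_X(PS2)P_2(X,Y)$,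 with expected hitting time $m_{MS}$. With $d(X)=m_{PS1}(X)$, for $X\in\mathcal{S}_{\mathrm{non}}$: $\Delta_{PS1}(X)=d(X)-\sum_{Y\in\mathcal{S}_{\mathrm{non}}}P_1(X,Y)d(Y)$, $\Delta_{PS2}(X)=d(X)-\sum_{Y\in\mathcal{S}_{\mathrm{non}}}P_2(X,Y)d(Y)$. *)

theory Defs
  imports "HOL-Analysis.Analysis"
begin

definition pure_strategy :: "'a set \<Rightarrow> 'a set \<Rightarrow> ('a \<Rightarrow> 'a \<Rightarrow> real) \<Rightarrow> bool" where
  "pure_strategy S Sopt P \<longleftrightarrow>
     finite S \<and> Sopt \<subseteq> S \<and>
     (\<forall>X\<in>S. \<forall>Y\<in>S. 0 \<le> P X Y) \<and>
     (\<forall>X\<in>S. (\<Sum>Y\<in>S. P X Y) = 1) \<and>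
     (\<forall>X\<in>Sopt. P X X = 1)"

text \<open>stay_prob S Sopt P n X = Pr(Phi_0, ..., Phi_n all lie outside Sopt | Phi_0 = X),
  i.e. Pr(T > n) where T is the first hitting time of Sopt.\<close>
fun stay_prob :: "'a set \<Rightarrow> 'a set \<Rightarrow> ('a \<Rightarrow> 'a \<Rightarrow> real) \<Rightarrow> nat \<Rightarrow> 'a \<Rightarrow> real" where
  "stay_prob S Sopt P 0 X = (if X \<in> Sopt then 0 else 1)"
| "stay_prob S Sopt P (Suc n) X =
     (if X \<in> Sopt then 0 else (\<Sum>Y\<in>S. P X Y * stay_prob S Sopt P n Y))"

text \<open>Expected hitting time E[T] = sum_{n>=0} Pr(T > n), valued in [0, \<infinity>].\<close>
definition hitting_time :: "'a set \<Rightarrow> 'a set \<Rightarrow> ('a \<Rightarrow> 'a \<Rightarrow> real) \<Rightarrow> 'a \<Rightarrow> ennreal" where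
  "hitting_time S Sopt P X = (\<Sum>n. ennreal (stay_prob S Sopt P n X))"

definition mixed_matrix :: "('a \<Rightarrow> real) \<Rightarrow> ('a \<Rightarrow> 'a \<Rightarrow> real) \<Rightarrow> ('a \<Rightarrow> 'a \<Rightarrow> real) \<Rightarrow> 'a \<Rightarrow> 'a \<Rightarrow> real" where
  "mixed_matrix q P1 P2 X Y = q X * P1 X Y + (1 - q X) * P2 X Y"

definition drift :: "'a set \<Rightarrow> 'a set \<Rightarrow> ('a \<Rightarrow> 'a \<Rightarrow> real) \<Rightarrow> ('a \<Rightarrow> real) \<Rightarrow> 'a \<Rightarrow> real" where
  "drift S Sopt P d X = d X - (\<Sum>Y\<in>S - Sopt. P X Y * d Y)"

end

theory Submission
  imports Defs
begin

fun gfun :: "'a set \<Rightarrow> 'a set \<Rightarrow> ('a \<Rightarrow> 'a \<Rightarrow> real) \<Rightarrow> ('a \<Rightarrow> real) \<Rightarrow> nat \<Rightarrow> 'a \<Rightarrow> real" where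
  "gfun S Sopt P D 0 X = (if X \<in> Sopt then 0 else D X)"
| "gfun S Sopt P D (Suc n) X = (if X \<in> Sopt then 0 else (\<Sum>Y\<in>S. P X Y * gfun S Sopt P D n Y))"

lemma stay_nonneg:
  assumes "\<forall>X\<in>S. \<forall>Y\<in>S. 0 \<le> P X Y"
  shows "X \<in> S \<Longrightarrow> 0 \<le> stay_prob S Sopt P n X"
proof (induction n arbitrary: X)
  case 0 then show ?case by simp
next
  case (Suc n) then show ?case using assms by (auto intro!: sum_nonneg)
qed

lemma stay_opt: "X \<in> Sopt \<Longrightarrow> stay_prob S Sopt P n X = 0"
  by (cases n) auto

lemma decomp:
  assumes P: "\<forall>X\<in>S. \<forall>Y\<in>S. 0 \<le> P X Y"
    and Dopt: "\<forall>X\<in>Sopt. D X = 0"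
    and Dfix: "\<forall>X\<in>S-Sopt. D X = 1 + (\<Sum>Y\<in>S. P X Y * D Y)"
  shows "X \<in> S \<Longrightarrow> D X = (\<Sum>k<n. stay_prob S Sopt P k X) + gfun S Sopt P D n X"
proof (induction n arbitrary: X)
  case 0 then show ?case using Dopt by auto
next
  case (Suc n)
  show ?case
  proof (cases "X \<in> Sopt")
    case True then show ?thesis using Dopt by (simp add: stay_opt)
  next
    case False
    have "(\<Sum>k<Suc n. stay_prob S Sopt P k X) + gfun S Sopt P D (Suc n) X
      = 1 + (\<Sum>k<n. \<Sum>Y\<in>S. P X Y * stay_prob S Sopt P k Y) + (\<Sum>Y\<in>S. P X Y * gfun S Sopt P D n Y)"
      using False by (simp only: sum.lessThan_Suc_shift) simp
    also have "\<dots> = 1 + (\<Sum>Y\<in>S. P X Y * ((\<Sum>k<n. stay_prob S Sopt P k Y) + gfun S Sopt P D n Y))"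
      by (simp add: sum.swap[of _ "{..<n}"] sum_distrib_left distrib_left sum.distrib)
    also have "\<dots> = 1 + (\<Sum>Y\<in>S. P X Y * D Y)"
      using Suc.IH by (auto intro!: sum.cong)
    also have "\<dots> = D X" using Dfix Suc.prems False by auto
    finally show ?thesis by simp
  qed
qed

lemma gbound:
  assumes P: "\<forall>X\<in>S. \<forall>Y\<in>S. 0 \<le> P X Y"
    and D: "\<forall>X\<in>S. 0 \<le> D X \<and> D X \<le> M"
  shows "X \<in> S \<Longrightarrow> 0 \<le> gfun S Sopt P D n X \<and> gfun S Sopt P D n X \<le> M * stay_prob S Sopt P n X"
proof (induction n arbitrary: X)
  case 0 then show ?case using D by auto
next
  case (Suc n)
  show ?case
  proof (cases "X \<in> Sopt")
    case True then show ?thesis by simp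
  next
    case False
    have "0 \<le> (\<Sum>Y\<in>S. P X Y * gfun S Sopt P D n Y)"
      using Suc P by (auto intro!: sum_nonneg)
    moreover have "(\<Sum>Y\<in>S. P X Y * gfun S Sopt P D n Y) \<le> (\<Sum>Y\<in>S. P X Y * (M * stay_prob S Sopt P n Y))"
      using Suc P by (auto intro!: sum_mono mult_left_mono)
    moreover have "(\<Sum>Y\<in>S. P X Y * (M * stay_prob S Sopt P n Y)) = M * (\<Sum>Y\<in>S. P X Y * stay_prob S Sopt P n Y)"
      by (simp add: sum_distrib_left algebra_simps)
    ultimately show ?thesis using False by simp
  qed
qed

lemma generic:
  assumes fin: "finite S"
    and P: "\<forall>X\<in>S. \<forall>Y\<in>S. 0 \<le> P X Y"
    and Dnn: "\<forall>X\<in>S. 0 \<le> D X"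
    and Dopt: "\<forall>X\<in>Sopt. D X = 0"
    and Dfix: "\<forall>X\<in>S-Sopt. D X = 1 + (\<Sum>Y\<in>S. P X Y * D Y)"
    and X: "X \<in> S"
  shows "hitting_time S Sopt P X = ennreal (D X)"
proof -
  define M where "M = Max (D ` S)"
  have DM: "\<forall>Y\<in>S. 0 \<le> D Y \<and> D Y \<le> M"
    using Dnn fin unfolding M_def by auto
  have M0: "0 \<le> M" using DM X by force
  let ?s = "\<lambda>n. stay_prob S Sopt P n X"
  let ?g = "\<lambda>n. gfun S Sopt P D n X"
  have snn: "\<And>n. 0 \<le> ?s n" using stay_nonneg[OF P X] .
  have dec: "\<And>n. D X = (\<Sum>k<n. ?s k) + ?g n" using decomp[OF P Dopt Dfix X] .
  have gb: "\<And>n. 0 \<le> ?g n \<and> ?g n \<le> M * ?s n" using gbound[OF P DM X] .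
  have summ: "summable ?s"
  proof (rule summableI_nonneg_bounded[where x = "D X"])
    show "\<And>n. 0 \<le> ?s n" by (rule snn)
    show "(\<Sum>i<n. ?s i) \<le> D X" for n using dec[of n] gb[of n] by linarith
  qed
  have "?s \<longlonglongrightarrow> 0" using summable_LIMSEQ_zero[OF summ] .
  hence "(\<lambda>n. M * ?s n) \<longlonglongrightarrow> 0" using tendsto_mult_right_zero by blast
  hence g0: "?g \<longlonglongrightarrow> 0"
    by (intro tendsto_sandwich[of "\<lambda>n. 0" ?g sequentially "\<lambda>n. M * ?s n" 0]) (use gb in auto)
  have "(\<lambda>n. D X - ?g n) \<longlonglongrightarrow> D X - 0"
    by (intro tendsto_intros g0)
  hence "?s sums D X"
  proof -
    have "(\<lambda>n. D X - ?g n) = (\<lambda>n. \<Sum>k<n. ?s k)" using dec by (auto simp: algebra_simps)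
    thus ?thesis using \<open>(\<lambda>n. D X - ?g n) \<longlonglongrightarrow> D X - 0\<close> unfolding sums_def by simp
  qed
  hence "suminf ?s = D X" by (rule sums_unique[symmetric])
  thus ?thesis unfolding hitting_time_def
    using suminf_ennreal2[OF snn summ] by simp
qed

theorem lemma2:
  fixes S Sopt :: "'a set" and P1 P2 :: "'a \<Rightarrow> 'a \<Rightarrow> real" and q :: "'a \<Rightarrow> real"
  assumes ps1: "pure_strategy S Sopt P1"
    and ps2: "pure_strategy S Sopt P2"
    and fin: "\<forall>X\<in>S. hitting_time S Sopt P1 X \<noteq> \<infinity>"
    and equiv: "\<forall>X\<in>S - Sopt.
        drift S Sopt P1 (\<lambda>Y. enn2real (hitting_time S Sopt P1 Y)) X =
        drift S Sopt P2 (\<lambda>Y. enn2real (hitting_time S Sopt P1 Y)) X"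
    and q: "\<forall>X\<in>S. 0 \<le> q X \<and> q X \<le> 1"
  shows "\<forall>X\<in>S. hitting_time S Sopt (mixed_matrix q P1 P2) X = hitting_time S Sopt P1 X"
proof -
  have finS: "finite S" and sub: "Sopt \<subseteq> S" and P1nn: "\<forall>X\<in>S. \<forall>Y\<in>S. 0 \<le> P1 X Y"
    using ps1 unfolding pure_strategy_def by auto
  have P2nn: "\<forall>X\<in>S. \<forall>Y\<in>S. 0 \<le> P2 X Y"
    using ps2 unfolding pure_strategy_def by auto
  define D where "D X = (\<Sum>n. stay_prob S Sopt P1 n X)" for X
  let ?s = "\<lambda>Y n. stay_prob S Sopt P1 n Y"
  have snn: "\<And>Y n. Y \<in> S \<Longrightarrow> 0 \<le> ?s Y n" using stay_nonneg[OF P1nn] by blast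
  have summ: "\<And>Y. Y \<in> S \<Longrightarrow> summable (?s Y)"
  proof -
    fix Y assume Y: "Y \<in> S"
    show "summable (?s Y)"
      by (rule summable_suminf_not_top) (use fin snn Y in \<open>auto simp: hitting_time_def\<close>)
  qed
  have hD: "\<And>Y. Y \<in> S \<Longrightarrow> hitting_time S Sopt P1 Y = ennreal (D Y)"
    unfolding hitting_time_def D_def by (rule suminf_ennreal2[OF snn summ])
  have Dnn: "\<forall>Y\<in>S. 0 \<le> D Y" unfolding D_def using snn summ by (auto intro: suminf_nonneg)
  have e2r: "\<And>Y. Y \<in> S \<Longrightarrow> enn2real (hitting_time S Sopt P1 Y) = D Y"
    using hD Dnn by simp
  have Dopt: "\<forall>X\<in>Sopt. D X = 0" unfolding D_def by (simp add: stay_opt)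
  have Dfix1: "D X = 1 + (\<Sum>Y\<in>S. P1 X Y * D Y)" if X: "X \<in> S - Sopt" for X
  proof -
    have "D X = ?s X 0 + (\<Sum>n. ?s X (Suc n))"
    proof -
      have "X \<in> S" using X by simp
      from suminf_split_head[OF summ[OF this]] show ?thesis unfolding D_def by simp
    qed
    also have "(\<Sum>n. ?s X (Suc n)) = (\<Sum>n. \<Sum>Y\<in>S. P1 X Y * ?s Y n)" using X by simp
    also have "\<dots> = (\<Sum>Y\<in>S. \<Sum>n. P1 X Y * ?s Y n)"
      by (rule suminf_sum) (rule summable_mult, rule summ)
    also have "\<dots> = (\<Sum>Y\<in>S. P1 X Y * D Y)"
      unfolding D_def by (rule sum.cong[OF refl], rule suminf_mult, rule summ)
    finally show ?thesis using X by simp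
  qed
  have sumsplit: "(\<Sum>Y\<in>S. P X Y * D Y) = (\<Sum>Y\<in>S - Sopt. P X Y * D Y)" for P X
    by (rule sum.mono_neutral_right) (use finS Dopt in auto)
  have eqP: "(\<Sum>Y\<in>S. P2 X Y * D Y) = (\<Sum>Y\<in>S. P1 X Y * D Y)" if X: "X \<in> S - Sopt" for X
  proof -
    have "drift S Sopt P1 D X = drift S Sopt P2 D X"
    proof -
      have "(\<lambda>Y. enn2real (hitting_time S Sopt P1 Y)) X = D X" using X e2r by auto
      have c1: "drift S Sopt Pm (\<lambda>Y. enn2real (hitting_time S Sopt P1 Y)) X = drift S Sopt Pm D X" for Pm
        unfolding drift_def using X e2r by (auto intro!: sum.cong)
      show ?thesis using equiv X c1[of P1] c1[of P2] by simp
    qed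
    thus ?thesis unfolding drift_def using sumsplit[of P1 X] sumsplit[of P2 X] by simp
  qed
  let ?PM = "mixed_matrix q P1 P2"
  have PMnn: "\<forall>X\<in>S. \<forall>Y\<in>S. 0 \<le> ?PM X Y"
    using q P1nn P2nn unfolding mixed_matrix_def by (auto intro!: add_nonneg_nonneg mult_nonneg_nonneg)
  have DfixM: "\<forall>X\<in>S-Sopt. D X = 1 + (\<Sum>Y\<in>S. ?PM X Y * D Y)"
  proof
    fix X assume X: "X \<in> S - Sopt"
    have "(\<Sum>Y\<in>S. ?PM X Y * D Y) = q X * (\<Sum>Y\<in>S. P1 X Y * D Y) + (1 - q X) * (\<Sum>Y\<in>S. P2 X Y * D Y)"
      unfolding mixed_matrix_def by (simp only: distrib_right sum.distrib sum_distrib_left mult.assoc)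
    also have "\<dots> = (\<Sum>Y\<in>S. P1 X Y * D Y)" by (simp add: eqP[OF X] left_diff_distrib)
    finally show "D X = 1 + (\<Sum>Y\<in>S. ?PM X Y * D Y)" using Dfix1[OF X] by simp
  qed
  show ?thesis
  proof
    fix X assume X: "X \<in> S"
    show "hitting_time S Sopt ?PM X = hitting_time S Sopt P1 X"
      using generic[OF finS PMnn Dnn Dopt DfixM X] hD[OF X] by simp
  qed
qed

end
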